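(* Let $j_1\ge0$ and let $J\ge j_1$ be an integer with $J\equiv j_1\pmod 2$. Then $$\sum_{\substack{j_2,j_3\ge0,\ j_2+j_3=J\\ (j_1,j_2,j_3)\in\mathbf J}}\phi_{j_1,j_2,j_3}(x_{12},x_{13},1)=\frac{\left(1-x_{13}^{j_1+1}x_{12}^{-j_1-1}\right)\left(1-x_{13}^{j_1+1}x_{12}^{j_1+1}\right)}{(j_1+1)\,x_{13}^{j_1}\,(1-x_{13}/x_{12})(1-x_{13}x_{12})}.$$
   Context: A triple $(j_1,j_2,j_3)$ of nonnegative integers is admissible if $|j_1-j_2|\le j_3\le j_1+j_2$ and $j_1+j_2+j_3$ is even; $\mathbf J$ denotes the set of admissible triples. Let $\mathcal H=\mathbb C[x_{12}+x_{12}^{-1},x_{13}+x_{13}^{-1},x_{23}+x_{23}^{-1}]\subset\mathbb C[x_{12}^{\pm1},x_{13}^{\pm1},x_{23}^{\pm1}]$. For $a,b\in\{\pm1\}$ set $K_{a,b}(j_1,j_2,j_3)=ab\,\frac{(aj_1+bj_2+j_3+a+b+2)(aj_1+bj_2-j_3+a+b)}{4(j_1+1)(j_2+1)}$. The genus two Schur polynomials $(\phi_{j_1,j_2,j_3})_{(j_1,j_2,j_3)\in\mathbf J}$ are the unique family in $\mathcal H$ with $\phi_{0,0,0}=1$ such that for all admissible $(j_1,j_2,j_3)$: $(x_{12}+x_{12}^{-1})\phi_{j_1,j_2,j_3}=\sum_{a,b\in\{\pm1\}}K_{a,b}(j_1,j_2,j_3)\phi_{j_1+a,j_2+b,j_3}$,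 $(x_{13}+x_{13}^{-1})\phi_{j_1,j_2,j_3}=\sum_{a,b\in\{\pm1\}}K_{a,b}(j_1,j_3,j_2)\phi_{j_1+a,j_2,j_3+b}$, $(x_{23}+x_{23}^{-1})\phi_{j_1,j_2,j_3}=\sum_{a,b\in\{\pm1\}}K_{a,b}(j_2,j_3,j_1)\phi_{j_1,j_2+a,j_3+b}$, where $\phi$ of a non-admissible triple is interpreted as $0$. *)

theory Defs
  imports Complex_Main
begin

definition admissible :: "nat \<Rightarrow> nat \<Rightarrow> nat \<Rightarrow> bool" where
  "admissible j1 j2 j3 \<longleftrightarrow>
     int j3 \<ge> \<bar>int j1 - int j2\<bar> \<and> j3 \<le> j1 + j2 \<and> even (j1 + j2 + j3)"

definition Kc :: "int \<Rightarrow> int \<Rightarrow> nat \<Rightarrow> nat \<Rightarrow> nat \<Rightarrow> complex" where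
  "Kc a b j1 j2 j3 =
     of_int (a * b * (a * int j1 + b * int j2 + int j3 + a + b + 2)
                   * (a * int j1 + b * int j2 - int j3 + a + b))
     / (4 * (of_nat j1 + 1) * (of_nat j2 + 1))"

definition ext ::
  "(nat \<Rightarrow> nat \<Rightarrow> nat \<Rightarrow> complex \<Rightarrow> complex \<Rightarrow> complex \<Rightarrow> complex)
   \<Rightarrow> int \<Rightarrow> int \<Rightarrow> int \<Rightarrow> complex \<Rightarrow> complex \<Rightarrow> complex \<Rightarrow> complex" where
  "ext phi i1 i2 i3 x y z =
     (if i1 \<ge> 0 \<and> i2 \<ge> 0 \<and> i3 \<ge> 0 \<and> admissible (nat i1) (nat i2) (nat i3)
      then phi (nat i1) (nat i2) (nat i3) x y z else 0)"

definition in_H :: "(complex \<Rightarrow> complex \<Rightarrow> complex \<Rightarrow> complex) \<Rightarrow> bool" where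
  "in_H f \<longleftrightarrow> (\<exists>N (c :: nat \<Rightarrow> nat \<Rightarrow> nat \<Rightarrow> complex).
     \<forall>x12 x13 x23. x12 \<noteq> 0 \<longrightarrow> x13 \<noteq> 0 \<longrightarrow> x23 \<noteq> 0 \<longrightarrow>
       f x12 x13 x23 = (\<Sum>a\<le>N. \<Sum>b\<le>N. \<Sum>d\<le>N. c a b d
          * (x12 + inverse x12) ^ a * (x13 + inverse x13) ^ b * (x23 + inverse x23) ^ d))"

definition genus2_schur ::
  "(nat \<Rightarrow> nat \<Rightarrow> nat \<Rightarrow> complex \<Rightarrow> complex \<Rightarrow> complex \<Rightarrow> complex) \<Rightarrow> bool" where
  "genus2_schur phi \<longleftrightarrow>
     (\<forall>j1 j2 j3. admissible j1 j2 j3 \<longrightarrow> in_H (phi j1 j2 j3)) \<and>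
     (\<forall>x y z. x \<noteq> 0 \<longrightarrow> y \<noteq> 0 \<longrightarrow> z \<noteq> 0 \<longrightarrow> phi 0 0 0 x y z = 1) \<and>
     (\<forall>j1 j2 j3 x y z. admissible j1 j2 j3 \<longrightarrow> x \<noteq> 0 \<longrightarrow> y \<noteq> 0 \<longrightarrow> z \<noteq> 0 \<longrightarrow>
        (x + inverse x) * phi j1 j2 j3 x y z =
          (\<Sum>a\<in>{1,-1}. \<Sum>b\<in>{1,-1}. Kc a b j1 j2 j3
             * ext phi (int j1 + a) (int j2 + b) (int j3) x y z) \<and>
        (y + inverse y) * phi j1 j2 j3 x y z =
          (\<Sum>a\<in>{1,-1}. \<Sum>b\<in>{1,-1}. Kc a b j1 j3 j2
             * ext phi (int j1 + a) (int j2) (int j3 + b) x y z) \<and>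
        (z + inverse z) * phi j1 j2 j3 x y z =
          (\<Sum>a\<in>{1,-1}. \<Sum>b\<in>{1,-1}. Kc a b j2 j3 j1
             * ext phi (int j1) (int j2 + a) (int j3 + b) x y z))"

end

theory Submission
  imports Defs
begin


definition cc :: "int \<Rightarrow> int \<Rightarrow> int \<Rightarrow> int \<Rightarrow> int \<Rightarrow> int" where
  "cc a b i1 i2 i3 = a * b * (a * i1 + b * i2 + i3 + a + b + 2) * (a * i1 + b * i2 - i3 + a + b)"

lemma Kc_cc: "Kc a b j1 j2 j3 = of_int (cc a b (int j1) (int j2) (int j3)) / (4 * (of_nat j1 + 1) * (of_nat j2 + 1))"
  by (simp add: Kc_def cc_def)

lemma sum_pm: "(\<Sum>a\<in>{1::int,-1}. f a) = f 1 + f (-1)" by simp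

locale L =
  fixes phi :: "nat \<Rightarrow> nat \<Rightarrow> nat \<Rightarrow> complex \<Rightarrow> complex \<Rightarrow> complex \<Rightarrow> complex"
    and x y :: complex
  assumes G: "genus2_schur phi" and x0: "x \<noteq> 0" and y0: "y \<noteq> 0"
begin

lemma Gs: "\<forall>j1 j2 j3 x y z. admissible j1 j2 j3 \<longrightarrow> x \<noteq> 0 \<longrightarrow> y \<noteq> 0 \<longrightarrow> z \<noteq> 0 \<longrightarrow>
        (x + inverse x) * phi j1 j2 j3 x y z =
          (\<Sum>a\<in>{1,-1}. \<Sum>b\<in>{1,-1}. Kc a b j1 j2 j3
             * ext phi (int j1 + a) (int j2 + b) (int j3) x y z) \<and>
        (y + inverse y) * phi j1 j2 j3 x y z =
          (\<Sum>a\<in>{1,-1}. \<Sum>b\<in>{1,-1}. Kc a b j1 j3 j2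
             * ext phi (int j1 + a) (int j2) (int j3 + b) x y z) \<and>
        (z + inverse z) * phi j1 j2 j3 x y z =
          (\<Sum>a\<in>{1,-1}. \<Sum>b\<in>{1,-1}. Kc a b j2 j3 j1
             * ext phi (int j1) (int j2 + a) (int j3 + b) x y z)"
  using G unfolding genus2_schur_def by (elim conjE)

definition g :: "int \<Rightarrow> int \<Rightarrow> int \<Rightarrow> complex" where "g a b c = ext phi a b c x y 1"

lemma g_adm: "admissible j1 j2 j3 \<Longrightarrow> g (int j1) (int j2) (int j3) = phi j1 j2 j3 x y 1"
  by (simp add: g_def ext_def)

lemma g_out: "\<not> (a \<ge> 0 \<and> b \<ge> 0 \<and> c \<ge> 0 \<and> admissible (nat a) (nat b) (nat c)) \<Longrightarrow> g a b c = 0"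
  by (auto simp add: g_def ext_def)

lemma g000: "g 0 0 0 = 1"
proof -
  have "admissible 0 0 0" by (simp add: admissible_def)
  then have "g (int 0) (int 0) (int 0) = phi 0 0 0 x y 1" by (rule g_adm)
  moreover have "phi 0 0 0 x y 1 = 1" using G x0 y0 unfolding genus2_schur_def by auto
  ultimately show ?thesis by simp
qed

lemma nz: "(of_nat n + 1 :: complex) \<noteq> 0"
proof -
  have "of_nat (Suc n) \<noteq> (0::complex)" by (rule of_nat_neq_0)
  then show ?thesis by (metis add.commute of_nat_Suc)
qed

lemma Kc_mul: "4 * (of_nat j1 + 1) * (of_nat j2 + 1) * Kc a b j1 j2 j3 = of_int (cc a b (int j1) (int j2) (int j3))"
proof -
  have "(4 * (of_nat j1 + 1) * (of_nat j2 + 1) :: complex) \<noteq> 0" by (intro no_zero_divisors nz) simp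
  then show ?thesis unfolding Kc_cc by simp
qed

lemma RX:
  assumes "admissible j1 j2 j3"
  shows "4 * (of_nat j1 + 1) * (of_nat j2 + 1) * (x + inverse x) * g (int j1) (int j2) (int j3) =
     of_int (cc 1 1 j1 j2 j3) * g (int j1+1) (int j2+1) (int j3) + of_int (cc 1 (-1) j1 j2 j3) * g (int j1+1) (int j2-1) (int j3)
   + of_int (cc (-1) 1 j1 j2 j3) * g (int j1-1) (int j2+1) (int j3) + of_int (cc (-1) (-1) j1 j2 j3) * g (int j1-1) (int j2-1) (int j3)"
proof -
  have e: "(x + inverse x) * phi j1 j2 j3 x y 1 =
          (\<Sum>a\<in>{1,-1}. \<Sum>b\<in>{1,-1}. Kc a b j1 j2 j3
             * ext phi (int j1 + a) (int j2 + b) (int j3) x y 1)"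
    using Gs[rule_format, OF assms x0 y0 one_neq_zero] by (elim conjE)
  then have h: "(x + inverse x) * g (int j1) (int j2) (int j3) =
     Kc 1 1 j1 j2 j3 * g (int j1+1) (int j2+1) (int j3) + Kc 1 (-1) j1 j2 j3 * g (int j1+1) (int j2-1) (int j3)
   + (Kc (-1) 1 j1 j2 j3 * g (int j1-1) (int j2+1) (int j3) + Kc (-1) (-1) j1 j2 j3 * g (int j1-1) (int j2-1) (int j3))"
    unfolding sum_pm g_def by (simp add: ext_def assms)
  define D :: complex where "D = 4 * (of_nat j1 + 1) * (of_nat j2 + 1)"
  from h have "D * ((x + inverse x) * g (int j1) (int j2) (int j3)) =
    (D * Kc 1 1 j1 j2 j3) * g (int j1+1) (int j2+1) (int j3) + (D * Kc 1 (-1) j1 j2 j3) * g (int j1+1) (int j2-1) (int j3)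
   + (D * Kc (-1) 1 j1 j2 j3) * g (int j1-1) (int j2+1) (int j3) + (D * Kc (-1) (-1) j1 j2 j3) * g (int j1-1) (int j2-1) (int j3)"
    by (simp add: distrib_left mult.assoc)
  then show ?thesis unfolding D_def Kc_mul by (simp only: mult.assoc)
qed

lemma RY:
  assumes "admissible j1 j2 j3"
  shows "4 * (of_nat j1 + 1) * (of_nat j3 + 1) * (y + inverse y) * g (int j1) (int j2) (int j3) =
     of_int (cc 1 1 j1 j3 j2) * g (int j1+1) (int j2) (int j3+1) + of_int (cc 1 (-1) j1 j3 j2) * g (int j1+1) (int j2) (int j3-1)
   + of_int (cc (-1) 1 j1 j3 j2) * g (int j1-1) (int j2) (int j3+1) + of_int (cc (-1) (-1) j1 j3 j2) * g (int j1-1) (int j2) (int j3-1)"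
proof -
  have e: "(y + inverse y) * phi j1 j2 j3 x y 1 =
          (\<Sum>a\<in>{1,-1}. \<Sum>b\<in>{1,-1}. Kc a b j1 j3 j2
             * ext phi (int j1 + a) (int j2) (int j3 + b) x y 1)"
    using Gs[rule_format, OF assms x0 y0 one_neq_zero] by (elim conjE)
  then have h: "(y + inverse y) * g (int j1) (int j2) (int j3) =
     Kc 1 1 j1 j3 j2 * g (int j1+1) (int j2) (int j3+1) + Kc 1 (-1) j1 j3 j2 * g (int j1+1) (int j2) (int j3-1)
   + (Kc (-1) 1 j1 j3 j2 * g (int j1-1) (int j2) (int j3+1) + Kc (-1) (-1) j1 j3 j2 * g (int j1-1) (int j2) (int j3-1))"
    unfolding sum_pm g_def by (simp add: ext_def assms)
  define D :: complex where "D = 4 * (of_nat j1 + 1) * (of_nat j3 + 1)"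
  from h have "D * ((y + inverse y) * g (int j1) (int j2) (int j3)) =
    (D * Kc 1 1 j1 j3 j2) * g (int j1+1) (int j2) (int j3+1) + (D * Kc 1 (-1) j1 j3 j2) * g (int j1+1) (int j2) (int j3-1)
   + (D * Kc (-1) 1 j1 j3 j2) * g (int j1-1) (int j2) (int j3+1) + (D * Kc (-1) (-1) j1 j3 j2) * g (int j1-1) (int j2) (int j3-1)"
    by (simp add: distrib_left mult.assoc)
  then show ?thesis unfolding D_def Kc_mul by (simp only: mult.assoc)
qed

lemma RZ:
  assumes "admissible j1 j2 j3"
  shows "8 * (of_nat j2 + 1) * (of_nat j3 + 1) * g (int j1) (int j2) (int j3) =
     of_int (cc 1 1 j2 j3 j1) * g (int j1) (int j2+1) (int j3+1) + of_int (cc 1 (-1) j2 j3 j1) * g (int j1) (int j2+1) (int j3-1)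
   + of_int (cc (-1) 1 j2 j3 j1) * g (int j1) (int j2-1) (int j3+1) + of_int (cc (-1) (-1) j2 j3 j1) * g (int j1) (int j2-1) (int j3-1)"
proof -
  have e: "(1 + inverse 1) * phi j1 j2 j3 x y 1 =
          (\<Sum>a\<in>{1,-1}. \<Sum>b\<in>{1,-1}. Kc a b j2 j3 j1
             * ext phi (int j1) (int j2 + a) (int j3 + b) x y 1)"
    using Gs[rule_format, OF assms x0 y0 one_neq_zero] by (elim conjE)
  then have h: "2 * g (int j1) (int j2) (int j3) =
     Kc 1 1 j2 j3 j1 * g (int j1) (int j2+1) (int j3+1) + Kc 1 (-1) j2 j3 j1 * g (int j1) (int j2+1) (int j3-1)
   + (Kc (-1) 1 j2 j3 j1 * g (int j1) (int j2-1) (int j3+1) + Kc (-1) (-1) j2 j3 j1 * g (int j1) (int j2-1) (int j3-1))"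
    unfolding sum_pm g_def by (simp add: ext_def assms)
  define D :: complex where "D = 4 * (of_nat j2 + 1) * (of_nat j3 + 1)"
  from h have hh: "D * (2 * g (int j1) (int j2) (int j3)) =
    (D * Kc 1 1 j2 j3 j1) * g (int j1) (int j2+1) (int j3+1) + (D * Kc 1 (-1) j2 j3 j1) * g (int j1) (int j2+1) (int j3-1)
   + (D * Kc (-1) 1 j2 j3 j1) * g (int j1) (int j2-1) (int j3+1) + (D * Kc (-1) (-1) j2 j3 j1) * g (int j1) (int j2-1) (int j3-1)"
    by (simp add: distrib_left mult.assoc)
  have l: "8 * (of_nat j2 + 1) * (of_nat j3 + 1) * g (int j1) (int j2) (int j3) = D * (2 * g (int j1) (int j2) (int j3))"
    unfolding D_def by (simp add: algebra_simps)
  show ?thesis using hh unfolding l D_def Kc_mul by (simp only: mult.assoc)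
qed

end



lemma V_rec:
  fixes x :: complex assumes "x \<noteq> 0"
  shows "(x + inverse x) * (x^(Suc k) + inverse x^(Suc k)) - (x^k + inverse x^k) = x^(Suc (Suc k)) + inverse x^(Suc (Suc k))"
  using assms by (simp add: field_simps)

lemma cheb:
  fixes a :: "nat \<Rightarrow> complex" and x :: complex
  assumes x: "x \<noteq> 0" and a0: "a 0 = 1" and a1: "a (Suc 0) = x + inverse x"
    and ar: "\<And>k. a (Suc (Suc k)) = (x + inverse x) * a (Suc k) - a k"
  shows "a (Suc (Suc n)) - a n = x^(Suc (Suc n)) + inverse x^(Suc (Suc n))"
proof -
  have "(a (Suc (Suc n)) - a n = x^(Suc (Suc n)) + inverse x^(Suc (Suc n))) \<and>
        (a (Suc (Suc (Suc n))) - a (Suc n) = x^(Suc (Suc (Suc n))) + inverse x^(Suc (Suc (Suc n))))"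
  proof (induction n)
    case 0
    show ?case using x by (simp add: ar a0 a1 field_simps)
  next
    case (Suc n)
    have "a (Suc (Suc (Suc (Suc n)))) - a (Suc (Suc n)) = (x + inverse x) * (a (Suc (Suc (Suc n))) - a (Suc n)) - (a (Suc (Suc n)) - a n)"
      by (simp only: ar[of "Suc (Suc n)"] ar[of n]) (simp add: algebra_simps)
    also have "\<dots> = (x + inverse x) * (x^(Suc (Suc (Suc n))) + inverse x^(Suc (Suc (Suc n)))) - (x^(Suc (Suc n)) + inverse x^(Suc (Suc n)))"
      using Suc.IH by (simp only:)
    also have "\<dots> = x^(Suc (Suc (Suc (Suc n)))) + inverse x^(Suc (Suc (Suc (Suc n))))" by (rule V_rec[OF x])
    finally show ?case using Suc.IH by (simp only:)
  qed
  then show ?thesis by blast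
qed

lemma alg_step:
  fixes n i X Y e0 A1 A0 Fm F0 Em E0 Ep :: complex
  assumes hX: "4*(n+1)*(i+1)*X*e0 = 4*(n+2)*(i+1)*A1 + 4*(n-i)*F0 + 4*i*(n+1)*Em"
    and hY: "4*(n+1)*(n-i+1)*Y*e0 = 4*(n+2)*(n-i+1)*A0 + 4*i*Fm + 4*(n-i)*(n+1)*E0"
    and hZ: "8*(i+1)*(n-i)*E0 = 4*(n+1)*F0 + 4*(i+1)*(n-i-1)*Ep + 4*i*(n-i)*Em"
    and d1: "n+1 \<noteq> 0" and d2: "i+1 \<noteq> 0" and d3: "n-i+1 \<noteq> 0" and d4: "n-i \<noteq> 0"
  shows "(X - Y)*(n+1)*e0 = (n+2)*(A1 - A0) +
     (((i+1)/(n-i)*F0 - 2*(i+1)*E0 + (2*(i+1) - 2*n + (n+1)*(n-i-1)/(n-i))*Ep)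
     - (i/(n-i+1)*Fm - 2*i*Em + (2*i - 2*n + (n+1)*(n-i)/(n-i+1))*E0))"
proof -
  have p: "4*(i+1)*(n+1)*((n-i+1)*(n-i)*((X - Y)*(n+1)*e0)) = 4*(i+1)*(n+1)*((n-i+1)*(n-i)*(n+2)*(A1 - A0)
     + (n-i+1)*((i+1)*F0 - 2*(i+1)*(n-i)*E0 + (2*(i+1)*(n-i) - 2*n*(n-i) + (n+1)*(n-i-1))*Ep)
     - (n-i)*(i*Fm - 2*i*(n-i+1)*Em + (2*i*(n-i+1) - 2*n*(n-i+1) + (n+1)*(n-i))*E0))"
    using hX hY hZ by algebra
  have "4*(i+1)*(n+1) \<noteq> (0::complex)" by (metis d1 d2 mult_eq_0_iff zero_neq_numeral)
  with p have p2: "(n-i+1)*(n-i)*((X - Y)*(n+1)*e0) = (n-i+1)*(n-i)*(n+2)*(A1 - A0)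
     + (n-i+1)*((i+1)*F0 - 2*(i+1)*(n-i)*E0 + (2*(i+1)*(n-i) - 2*n*(n-i) + (n+1)*(n-i-1))*Ep)
     - (n-i)*(i*Fm - 2*i*(n-i+1)*Em + (2*i*(n-i+1) - 2*n*(n-i+1) + (n+1)*(n-i))*E0)"
    by (simp only: mult_cancel_left) simp
  have r0: "\<And>q1 q2 q3 q4. (n-i)*q1 = i+1 \<Longrightarrow> (n-i)*q2 = (n+1)*(n-i-1) \<Longrightarrow> (n-i+1)*q3 = i \<Longrightarrow> (n-i+1)*q4 = (n+1)*(n-i) \<Longrightarrow>
     (n-i+1)*(n-i)*((n+2)*(A1 - A0) +
     ((q1*F0 - 2*(i+1)*E0 + (2*(i+1) - 2*n + q2)*Ep)
     - (q3*Fm - 2*i*Em + (2*i - 2*n + q4)*E0))) = (n-i+1)*(n-i)*(n+2)*(A1 - A0)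
     + (n-i+1)*((i+1)*F0 - 2*(i+1)*(n-i)*E0 + (2*(i+1)*(n-i) - 2*n*(n-i) + (n+1)*(n-i-1))*Ep)
     - (n-i)*(i*Fm - 2*i*(n-i+1)*Em + (2*i*(n-i+1) - 2*n*(n-i+1) + (n+1)*(n-i))*E0)"
    by algebra
  have r: "(n-i+1)*(n-i)*((n+2)*(A1 - A0) +
     (((i+1)/(n-i)*F0 - 2*(i+1)*E0 + (2*(i+1) - 2*n + (n+1)*(n-i-1)/(n-i))*Ep)
     - (i/(n-i+1)*Fm - 2*i*Em + (2*i - 2*n + (n+1)*(n-i)/(n-i+1))*E0))) = (n-i+1)*(n-i)*(n+2)*(A1 - A0)
     + (n-i+1)*((i+1)*F0 - 2*(i+1)*(n-i)*E0 + (2*(i+1)*(n-i) - 2*n*(n-i) + (n+1)*(n-i-1))*Ep)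
     - (n-i)*(i*Fm - 2*i*(n-i+1)*Em + (2*i*(n-i+1) - 2*n*(n-i+1) + (n+1)*(n-i))*E0)"
    by (rule r0) (use d3 d4 in simp_all)
  have "(n-i+1)*(n-i) \<noteq> (0::complex)" using d3 d4 by simp
  then show ?thesis using p2 r by (metis mult_cancel_left)
qed

lemma alg_last:
  fixes n X Y e0 A1 A0 Fm F0 Em E0 :: complex
  assumes hX: "4*(n+1)*(n+1)*X*e0 = 4*(n+2)*(n+1)*A1 + 4*(n-n)*F0 + 4*n*(n+1)*Em"
    and hY: "4*(n+1)*(n-n+1)*Y*e0 = 4*(n+2)*(n-n+1)*A0 + 4*n*Fm + 4*(n-n)*(n+1)*E0"
    and d1: "n+1 \<noteq> 0"
  shows "(X - Y)*(n+1)*e0 = (n+2)*(A1 - A0) - n*Fm + n*Em"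
proof -
  have "(n+1)*((n+1)*X*e0) = (n+1)*((n+2)*A1 + n*Em)" using hX by algebra
  then have a: "(n+1)*X*e0 = (n+2)*A1 + n*Em" using d1 by simp
  have b: "(n+1)*Y*e0 = (n+2)*A0 + n*Fm" using hY by algebra
  show ?thesis using a b by algebra
qed

context L begin

lemma adm_ext: "i \<le> n \<Longrightarrow> admissible n i (n - i)"
  by (auto simp: admissible_def)

definition e :: "nat \<Rightarrow> int \<Rightarrow> complex" where "e n j = g (int n) j (int n - j)"
definition F :: "nat \<Rightarrow> int \<Rightarrow> complex" where "F n j = g (int n - 1) (j + 1) (int n - j)"
definition E' :: "nat \<Rightarrow> int \<Rightarrow> complex" where "E' n j = g (int n - 1) j (int n - 1 - j)"

lemma RXe:
  assumes "i \<le> n"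
  shows "4 * (of_nat n + 1) * (of_nat i + 1) * (x + inverse x) * e n (int i) =
    4 * (of_nat n + 2) * (of_nat i + 1) * e (n+1) (int i + 1)
  + 4 * (of_nat n - of_nat i) * F n (int i)
  + 4 * of_nat i * (of_nat n + 1) * E' n (int i - 1)"
  using RX[OF adm_ext[OF assms]] assms by (simp add: e_def F_def E'_def cc_def of_nat_diff algebra_simps)

lemma RYe:
  assumes "i \<le> n"
  shows "4 * (of_nat n + 1) * (of_nat n - of_nat i + 1) * (y + inverse y) * e n (int i) =
    4 * (of_nat n + 2) * (of_nat n - of_nat i + 1) * e (n+1) (int i)
  + 4 * of_nat i * F n (int i - 1)
  + 4 * (of_nat n - of_nat i) * (of_nat n + 1) * E' n (int i)"
  using RY[OF adm_ext[OF assms]] assms by (simp add: e_def F_def E'_def cc_def of_nat_diff algebra_simps)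

lemma RZe:
  assumes "i < n"
  shows "8 * (of_nat i + 1) * (of_nat n - of_nat i) * E' n (int i) =
    4 * (of_nat n + 1) * F n (int i)
  + 4 * (of_nat i + 1) * (of_nat n - of_nat i - 1) * E' n (int i + 1)
  + 4 * of_nat i * (of_nat n - of_nat i) * E' n (int i - 1)"
proof -
  have "i \<le> n - 1" using assms by simp
  from RZ[OF adm_ext[OF this]] show ?thesis
    using assms by (simp add: e_def F_def E'_def cc_def of_nat_diff algebra_simps)
qed


definition t :: "nat \<Rightarrow> nat \<Rightarrow> complex" where
  "t n k = of_nat k / (of_nat n - of_nat k + 1) * F n (int k - 1) - 2 * of_nat k * E' n (int k - 1)
     + (2 * of_nat k - 2 * of_nat n + (of_nat n + 1) * (of_nat n - of_nat k) / (of_nat n - of_nat k + 1)) * E' n (int k)"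

lemma nz_diff: "i \<le> n \<Longrightarrow> (of_nat n - of_nat i + 1 :: complex) \<noteq> 0"
  using nz[of "n - i"] by (simp add: of_nat_diff)

lemma nz_diff2: "i < n \<Longrightarrow> (of_nat n - of_nat i :: complex) \<noteq> 0"
proof -
  assume a: "i < n"
  then have "(of_nat n - of_nat i :: complex) = of_nat (n - i)" by (simp add: of_nat_diff)
  moreover have "n - i \<noteq> 0" using a by simp
  ultimately show ?thesis by simp
qed

lemma step_lt:
  assumes "i < n"
  shows "(x + inverse x - (y + inverse y)) * (of_nat n + 1) * e n (int i) =
     (of_nat n + 2) * (e (n+1) (int i + 1) - e (n+1) (int i)) + (t n (Suc i) - t n i)"
proof -
  have le: "i \<le> n" using assms by simp
  have d1: "(of_nat n + 1 :: complex) \<noteq> 0" by (rule nz)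
  have d2: "(of_nat i + 1 :: complex) \<noteq> 0" by (rule nz)
  have d3: "(of_nat n - of_nat i + 1 :: complex) \<noteq> 0" using le by (rule nz_diff)
  have d4: "(of_nat n - of_nat i :: complex) \<noteq> 0" using assms by (rule nz_diff2)
  have i1: "int (Suc i) = int i + 1" by simp
  have i2: "int i + 1 - 1 = int i" by simp
  have tS: "t n (Suc i) = (of_nat i + 1) / (of_nat n - of_nat i) * F n (int i) - 2 * (of_nat i + 1) * E' n (int i)
     + (2 * (of_nat i + 1) - 2 * of_nat n + (of_nat n + 1) * (of_nat n - of_nat i - 1) / (of_nat n - of_nat i)) * E' n (int i + 1)"
    unfolding t_def i1 i2 by (simp add: algebra_simps)
  show ?thesis unfolding tS t_def[of n i]
    by (rule alg_step[OF RXe[OF le] RYe[OF le] RZe[OF assms] d1 d2 d3 d4])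
qed

lemma step_last:
  "(x + inverse x - (y + inverse y)) * (of_nat n + 1) * e n (int n) =
     (of_nat n + 2) * (e (n+1) (int n + 1) - e (n+1) (int n)) - of_nat n * F n (int n - 1) + of_nat n * E' n (int n - 1)"
  by (rule alg_last[OF RXe[of n n] RYe[of n n] nz]) simp_all

lemma sumE:
  "(x + inverse x - (y + inverse y)) * (of_nat n + 1) * (\<Sum>i<Suc n. e n (int i)) =
     (of_nat n + 2) * (e (n+1) (int n + 1) - e (n+1) 0) - of_nat n * E' n (int n - 1) + of_nat n * E' n 0"
proof -
  let ?c = "(x + inverse x - (y + inverse y)) * (of_nat n + 1)"
  have "?c * (\<Sum>i<Suc n. e n (int i)) = (\<Sum>i<n. ?c * e n (int i)) + ?c * e n (int n)"
    by (simp add: sum_distrib_left distrib_left)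
  also have "(\<Sum>i<n. ?c * e n (int i)) = (\<Sum>i<n. (of_nat n + 2) * (e (n+1) (int i + 1) - e (n+1) (int i)) + (t n (Suc i) - t n i))"
    by (rule sum.cong[OF refl]) (rule step_lt, simp)
  also have "\<dots> = (of_nat n + 2) * (\<Sum>i<n. e (n+1) (int (Suc i)) - e (n+1) (int i)) + (\<Sum>i<n. t n (Suc i) - t n i)"
    by (simp only: sum.distrib sum_distrib_left of_nat_Suc add.commute[of 1])
  also have "\<dots> = (of_nat n + 2) * (e (n+1) (int n) - e (n+1) 0) + (t n n - t n 0)"
    by (simp only: sum_lessThan_telescope[where f = "\<lambda>i. e (n+1) (int i)"] sum_lessThan_telescope[where f = "t n"]) simp
  also have "?c * e n (int n) = (of_nat n + 2) * (e (n+1) (int n + 1) - e (n+1) (int n)) - of_nat n * F n (int n - 1) + of_nat n * E' n (int n - 1)"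
    by (rule step_last)
  also have "t n n = of_nat n * F n (int n - 1) - 2 * of_nat n * E' n (int n - 1)"
    by (simp add: t_def)
  also have "t n 0 = - of_nat n * E' n 0"
  proof -
    have "(of_nat n + 1 :: complex) \<noteq> 0" by (rule nz)
    then show ?thesis by (simp add: t_def field_simps)
  qed
  finally show ?thesis by (simp add: algebra_simps)
qed

end



lemma alg_z:
  fixes m i j A B Cc Dd Ee :: complex
  assumes "8*(m+i+1)*(j+m-i+1)*A = 4*(j+m+2)*(m+1)*B + 4*(i+1)*(j-i)*Cc + 4*i*(j-i+1)*Dd + 4*m*(j+m+1)*Ee"
  shows "(m+1)*(j+m+2)*B = (2*(m+1)*(j+m+1) - j)*A - m*(j+m+1)*Ee
     + (i*(j-i+1)*A - (i+1)*(j-i)*Cc) + ((i+1)*(j-i)*A - i*(j-i+1)*Dd)"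
  using assms by algebra

context L begin

definition ph :: "nat \<Rightarrow> int \<Rightarrow> int \<Rightarrow> complex" where
  "ph j1 M k = g (int j1) (M + k) (int j1 + M - k)"

lemma adm_z: "i \<le> j1 \<Longrightarrow> admissible j1 (m + i) (j1 + m - i)"
  by (auto simp: admissible_def)

lemma Zph:
  assumes "i \<le> j1"
  shows "8 * (of_nat m + of_nat i + 1) * (of_nat j1 + of_nat m - of_nat i + 1) * ph j1 (int m) (int i) =
    4 * (of_nat j1 + of_nat m + 2) * (of_nat m + 1) * ph j1 (int m + 1) (int i)
  + 4 * (of_nat i + 1) * (of_nat j1 - of_nat i) * ph j1 (int m) (int i + 1)
  + 4 * of_nat i * (of_nat j1 - of_nat i + 1) * ph j1 (int m) (int i - 1)
  + 4 * of_nat m * (of_nat j1 + of_nat m + 1) * ph j1 (int m - 1) (int i)"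
  using RZ[OF adm_z[OF assms, of m]] assms by (simp add: ph_def cc_def of_nat_diff algebra_simps)

definition S :: "nat \<Rightarrow> int \<Rightarrow> complex" where
  "S j1 M = (\<Sum>i<Suc j1. ph j1 M (int i))"

definition u :: "nat \<Rightarrow> int \<Rightarrow> nat \<Rightarrow> complex" where
  "u j1 M k = of_nat k * (of_nat j1 - of_nat k + 1) * ph j1 M (int k)"
definition v :: "nat \<Rightarrow> int \<Rightarrow> nat \<Rightarrow> complex" where
  "v j1 M k = of_nat k * (of_nat j1 - of_nat k + 1) * ph j1 M (int k - 1)"

lemma eq_i:
  assumes "i \<le> j1"
  shows "(of_nat m + 1) * (of_nat j1 + of_nat m + 2) * ph j1 (int m + 1) (int i) =
    (2 * (of_nat m + 1) * (of_nat j1 + of_nat m + 1) - of_nat j1) * ph j1 (int m) (int i)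
    - of_nat m * (of_nat j1 + of_nat m + 1) * ph j1 (int m - 1) (int i)
    + (u j1 (int m) i - u j1 (int m) (Suc i)) + (v j1 (int m) (Suc i) - v j1 (int m) i)"
proof -
  have a: "int (Suc i) = int i + 1" by simp
  have b: "int i + 1 - 1 = int i" by simp
  have c: "(of_nat j1 - of_nat (Suc i) + 1 :: complex) = of_nat j1 - of_nat i" by simp
  show ?thesis unfolding u_def v_def a b c
    using alg_z[OF Zph[OF assms, of m]] by (simp add: algebra_simps)
qed

lemma S_rec:
  "(of_nat m + 1) * (of_nat j1 + of_nat m + 2) * S j1 (int m + 1) =
    (2 * (of_nat m + 1) * (of_nat j1 + of_nat m + 1) - of_nat j1) * S j1 (int m)
    - of_nat m * (of_nat j1 + of_nat m + 1) * S j1 (int m - 1)"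
proof -
  have "(of_nat m + 1) * (of_nat j1 + of_nat m + 2) * S j1 (int m + 1) =
     (\<Sum>i<Suc j1. (2 * (of_nat m + 1) * (of_nat j1 + of_nat m + 1) - of_nat j1) * ph j1 (int m) (int i)
    - of_nat m * (of_nat j1 + of_nat m + 1) * ph j1 (int m - 1) (int i)
    + (u j1 (int m) i - u j1 (int m) (Suc i)) + (v j1 (int m) (Suc i) - v j1 (int m) i))"
    unfolding S_def sum_distrib_left by (rule sum.cong[OF refl]) (rule eq_i, simp)
  also have "\<dots> = (2 * (of_nat m + 1) * (of_nat j1 + of_nat m + 1) - of_nat j1) * S j1 (int m)
    - of_nat m * (of_nat j1 + of_nat m + 1) * S j1 (int m - 1)
    + (u j1 (int m) 0 - u j1 (int m) (Suc j1)) + (v j1 (int m) (Suc j1) - v j1 (int m) 0)"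
  proof -
    have "(\<Sum>i<Suc j1. (2 * (of_nat m + 1) * (of_nat j1 + of_nat m + 1) - of_nat j1) * ph j1 (int m) (int i)
    - of_nat m * (of_nat j1 + of_nat m + 1) * ph j1 (int m - 1) (int i)
    + (u j1 (int m) i - u j1 (int m) (Suc i)) + (v j1 (int m) (Suc i) - v j1 (int m) i)) =
      (\<Sum>i<Suc j1. (2 * (of_nat m + 1) * (of_nat j1 + of_nat m + 1) - of_nat j1) * ph j1 (int m) (int i)
    - of_nat m * (of_nat j1 + of_nat m + 1) * ph j1 (int m - 1) (int i))
    + (\<Sum>i<Suc j1. u j1 (int m) i - u j1 (int m) (Suc i)) + (\<Sum>i<Suc j1. v j1 (int m) (Suc i) - v j1 (int m) i)"
      by (simp only: sum.distrib)
    also have "(\<Sum>i<Suc j1. u j1 (int m) i - u j1 (int m) (Suc i)) = u j1 (int m) 0 - u j1 (int m) (Suc j1)"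
      by (rule sum_lessThan_telescope')
    also have "(\<Sum>i<Suc j1. v j1 (int m) (Suc i) - v j1 (int m) i) = v j1 (int m) (Suc j1) - v j1 (int m) 0"
      by (rule sum_lessThan_telescope)
    also have "(\<Sum>i<Suc j1. (2 * (of_nat m + 1) * (of_nat j1 + of_nat m + 1) - of_nat j1) * ph j1 (int m) (int i)
    - of_nat m * (of_nat j1 + of_nat m + 1) * ph j1 (int m - 1) (int i)) =
      (2 * (of_nat m + 1) * (of_nat j1 + of_nat m + 1) - of_nat j1) * S j1 (int m)
    - of_nat m * (of_nat j1 + of_nat m + 1) * S j1 (int m - 1)"
      unfolding S_def sum_distrib_left sum_subtractf ..
    finally show ?thesis .
  qed
  also have "u j1 (int m) 0 = 0" by (simp add: u_def)
  also have "u j1 (int m) (Suc j1) = 0" by (simp add: u_def)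
  also have "v j1 (int m) 0 = 0" by (simp add: v_def)
  also have "v j1 (int m) (Suc j1) = 0" by (simp add: v_def)
  finally show ?thesis by simp
qed

lemma S_const: "S j1 (int m) = S j1 0"
proof -
  have "S j1 (int m) = S j1 0 \<and> S j1 (int (Suc m)) = S j1 0"
  proof (induction m)
    case 0
    have r: "(of_nat 0 + 1) * (of_nat j1 + of_nat 0 + 2) * S j1 (int 0 + 1) =
      (2 * (of_nat 0 + 1) * (of_nat j1 + of_nat 0 + 1) - of_nat j1) * S j1 (int 0)
      - of_nat 0 * (of_nat j1 + of_nat 0 + 1) * S j1 (int 0 - 1)" by (rule S_rec)
    have nz2: "(of_nat j1 + 2 :: complex) \<noteq> 0" using nz[of "Suc j1"] by (simp add: add.commute add.left_commute)
    have r2: "(of_nat j1 + 2) * S j1 1 = (of_nat j1 + 2) * S j1 0" using r by (simp add: algebra_simps)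
    have "S j1 1 = S j1 0" using r2 nz2 by (metis mult_cancel_left)
    then show ?case by simp
  next
    case (Suc m)
    have r: "(of_nat (Suc m) + 1) * (of_nat j1 + of_nat (Suc m) + 2) * S j1 (int (Suc m) + 1) =
      (2 * (of_nat (Suc m) + 1) * (of_nat j1 + of_nat (Suc m) + 1) - of_nat j1) * S j1 (int (Suc m))
      - of_nat (Suc m) * (of_nat j1 + of_nat (Suc m) + 1) * S j1 (int (Suc m) - 1)" by (rule S_rec)
    have i1: "int (Suc m) - 1 = int m" by simp
    have i2: "int (Suc m) + 1 = int (Suc (Suc m))" by simp
    have d1: "(of_nat (Suc m) + 1 :: complex) \<noteq> 0" by (rule nz)
    have e2: "(of_nat j1 + of_nat (Suc m) + 2 :: complex) = of_nat (j1 + m + 2) + 1" by simp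
    have d2: "(of_nat j1 + of_nat (Suc m) + 2 :: complex) \<noteq> 0" unfolding e2 by (rule nz)
    have d: "(of_nat (Suc m) + 1) * (of_nat j1 + of_nat (Suc m) + 2) \<noteq> (0::complex)"
      using d1 d2 by (rule no_zero_divisors)
    from Suc.IH have IH1: "S j1 (int m) = S j1 0" and IH2: "S j1 (int (Suc m)) = S j1 0" by blast+
    from r have r': "(of_nat (Suc m) + 1) * (of_nat j1 + of_nat (Suc m) + 2) * S j1 (int (Suc (Suc m))) =
      (2 * (of_nat (Suc m) + 1) * (of_nat j1 + of_nat (Suc m) + 1) - of_nat j1) * S j1 (int (Suc m))
      - of_nat (Suc m) * (of_nat j1 + of_nat (Suc m) + 1) * S j1 (int m)" unfolding i1 i2 .
    have "(of_nat (Suc m) + 1) * (of_nat j1 + of_nat (Suc m) + 2) * S j1 (int (Suc (Suc m))) =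
          (of_nat (Suc m) + 1) * (of_nat j1 + of_nat (Suc m) + 2) * S j1 0"
      using r' IH1 IH2 by algebra
    then have "S j1 (int (Suc (Suc m))) = S j1 0" using d by simp
    then show ?case using Suc.IH by simp
  qed
  then show ?thesis by blast
qed

end



lemma final_alg:
  fixes x y E :: complex and n :: nat
  assumes x0: "x \<noteq> 0" and y0: "y \<noteq> 0" and xy: "y \<noteq> x" and xy1: "y * x \<noteq> 1"
    and h: "(x + inverse x - (y + inverse y)) * (of_nat n + 1) * E = (x^Suc n + inverse x^Suc n) - (y^Suc n + inverse y^Suc n)"
  shows "E = (1 - y ^ (n + 1) * inverse x ^ (n + 1)) * (1 - y ^ (n + 1) * x ^ (n + 1))
         / ((of_nat n + 1) * y ^ n * (1 - y / x) * (1 - y * x))"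
proof -
  define p where "p = x^n"
  define q where "q = y^n"
  have p0: "p \<noteq> 0" using x0 by (simp add: p_def)
  have q0: "q \<noteq> 0" using y0 by (simp add: q_def)
  have nn: "(of_nat n + 1 :: complex) \<noteq> 0" by (metis add.commute of_nat_Suc of_nat_eq_0_iff nat.distinct(1))
  have d1: "1 - y / x \<noteq> 0" using xy x0 by (simp add: field_simps)
  have d2: "1 - y * x \<noteq> 0" using xy1 by simp
  have XY: "x + inverse x - (y + inverse y) = (x - y) * (x * y - 1) / (x * y)"
    using x0 y0 by (simp add: field_simps)
  have XY0: "x + inverse x - (y + inverse y) \<noteq> 0"
    unfolding XY using x0 y0 xy xy1 by (simp add: mult.commute)
  have h': "(x + inverse x - (y + inverse y)) * (of_nat n + 1) * E = (x*p + inverse (x*p)) - (y*q + inverse (y*q))"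
    using h by (simp add: p_def q_def power_inverse)
  have R: "(1 - y ^ (n + 1) * inverse x ^ (n + 1)) * (1 - y ^ (n + 1) * x ^ (n + 1))
         / ((of_nat n + 1) * y ^ n * (1 - y / x) * (1 - y * x)) =
         (1 - y*q * inverse (x*p)) * (1 - y*q*(x*p)) / ((of_nat n + 1) * q * (1 - y / x) * (1 - y * x))"
    by (simp add: p_def q_def power_inverse)
  have Deq: "(of_nat n + 1) * q * (1 - y / x) * (1 - y * x) = - (y*q) * ((x + inverse x - (y + inverse y)) * (of_nat n + 1))"
    using x0 y0 by (simp add: field_simps)
  have Neq: "(1 - y*q * inverse (x*p)) * (1 - y*q*(x*p)) = - (y*q) * ((x*p + inverse (x*p)) - (y*q + inverse (y*q)))"
    using x0 y0 p0 q0 by (simp add: field_simps)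
  have D0: "(of_nat n + 1) * q * (1 - y / x) * (1 - y * x) \<noteq> 0"
    using nn q0 d1 d2 by simp
  have "E * ((of_nat n + 1) * q * (1 - y / x) * (1 - y * x)) = (1 - y*q * inverse (x*p)) * (1 - y*q*(x*p))"
    unfolding Deq Neq h'[symmetric] by (simp only: ac_simps)
  then show ?thesis unfolding R using D0 by (simp add: eq_divide_eq)
qed

context L begin

lemma edgeX:
  "(of_nat n + 1) * (x + inverse x) * g (int n) (int n) 0 =
   (of_nat n + 2) * g (int n + 1) (int n + 1) 0 + of_nat n * g (int n - 1) (int n - 1) 0"
proof -
  have h: "4 * (of_nat n + 1) * (of_nat n + 1) * (x + inverse x) * g (int n) (int n) 0 =
    4 * (of_nat n + 2) * (of_nat n + 1) * g (int n + 1) (int n + 1) 0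
    + 4 * of_nat n * (of_nat n + 1) * g (int n - 1) (int n - 1) 0"
    using RXe[of n n] by (simp add: e_def F_def E'_def ac_simps)
  have "(of_nat n + 1) * ((of_nat n + 1) * (x + inverse x) * g (int n) (int n) 0) =
     (of_nat n + 1) * ((of_nat n + 2) * g (int n + 1) (int n + 1) 0 + of_nat n * g (int n - 1) (int n - 1) 0)"
    using h by algebra
  then show ?thesis using nz[of n] by simp
qed

lemma edgeY:
  "(of_nat n + 1) * (y + inverse y) * g (int n) 0 (int n) =
   (of_nat n + 2) * g (int n + 1) 0 (int n + 1) + of_nat n * g (int n - 1) 0 (int n - 1)"
proof -
  have h: "4 * (of_nat n + 1) * (of_nat n + 1) * (y + inverse y) * g (int n) 0 (int n) =
    4 * (of_nat n + 2) * (of_nat n + 1) * g (int n + 1) 0 (int n + 1)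
    + 4 * of_nat n * (of_nat n + 1) * g (int n - 1) 0 (int n - 1)"
    using RYe[of 0 n] by (simp add: e_def F_def E'_def ac_simps)
  have "(of_nat n + 1) * ((of_nat n + 1) * (y + inverse y) * g (int n) 0 (int n)) =
     (of_nat n + 1) * ((of_nat n + 2) * g (int n + 1) 0 (int n + 1) + of_nat n * g (int n - 1) 0 (int n - 1))"
    using h by algebra
  then show ?thesis using nz[of n] by simp
qed

lemma alphaX:
  "(of_nat n + 2) * g (int n + 1) (int n + 1) 0 - of_nat n * g (int n - 1) (int n - 1) 0 = x^(Suc n) + inverse x^(Suc n)"
proof -
  define a where "a k = of_nat (Suc k) * g (int k) (int k) 0" for k
  have a0: "a 0 = 1" by (simp add: a_def g000)
  have a1: "a (Suc 0) = x + inverse x" using edgeX[of 0] a0 by (simp add: a_def)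
  have ar: "a (Suc (Suc k)) = (x + inverse x) * a (Suc k) - a k" for k
  proof -
    have "(of_nat (Suc k) + 1) * (x + inverse x) * g (int (Suc k)) (int (Suc k)) 0 =
      (of_nat (Suc k) + 2) * g (int (Suc k) + 1) (int (Suc k) + 1) 0 + of_nat (Suc k) * g (int (Suc k) - 1) (int (Suc k) - 1) 0"
      by (rule edgeX)
    then show ?thesis unfolding a_def by (simp add: algebra_simps)
  qed
  show ?thesis
  proof (cases n)
    case 0
    then show ?thesis using a1 by (simp add: a_def)
  next
    case (Suc k)
    have "a (Suc (Suc k)) - a k = x^(Suc (Suc k)) + inverse x^(Suc (Suc k))"
      by (rule cheb[OF x0 a0 a1 ar])
    then show ?thesis using Suc by (simp add: a_def algebra_simps)
  qed
qed

lemma alphaY: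
  "(of_nat n + 2) * g (int n + 1) 0 (int n + 1) - of_nat n * g (int n - 1) 0 (int n - 1) = y^(Suc n) + inverse y^(Suc n)"
proof -
  define a where "a k = of_nat (Suc k) * g (int k) 0 (int k)" for k
  have a0: "a 0 = 1" by (simp add: a_def g000)
  have a1: "a (Suc 0) = y + inverse y" using edgeY[of 0] a0 by (simp add: a_def)
  have ar: "a (Suc (Suc k)) = (y + inverse y) * a (Suc k) - a k" for k
  proof -
    have "(of_nat (Suc k) + 1) * (y + inverse y) * g (int (Suc k)) 0 (int (Suc k)) =
      (of_nat (Suc k) + 2) * g (int (Suc k) + 1) 0 (int (Suc k) + 1) + of_nat (Suc k) * g (int (Suc k) - 1) 0 (int (Suc k) - 1)"
      by (rule edgeY)
    then show ?thesis unfolding a_def by (simp add: algebra_simps)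
  qed
  show ?thesis
  proof (cases n)
    case 0
    then show ?thesis using a1 by (simp add: a_def)
  next
    case (Suc k)
    have "a (Suc (Suc k)) - a k = y^(Suc (Suc k)) + inverse y^(Suc (Suc k))"
      by (rule cheb[OF y0 a0 a1 ar])
    then show ?thesis using Suc by (simp add: a_def algebra_simps)
  qed
qed

lemma E_formula:
  "(x + inverse x - (y + inverse y)) * (of_nat n + 1) * (\<Sum>i<Suc n. e n (int i)) =
   (x^Suc n + inverse x^Suc n) - (y^Suc n + inverse y^Suc n)"
proof -
  have "(x + inverse x - (y + inverse y)) * (of_nat n + 1) * (\<Sum>i<Suc n. e n (int i)) =
     ((of_nat n + 2) * g (int n + 1) (int n + 1) 0 - of_nat n * g (int n - 1) (int n - 1) 0)
     - ((of_nat n + 2) * g (int n + 1) 0 (int n + 1) - of_nat n * g (int n - 1) 0 (int n - 1))"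
    unfolding sumE by (simp add: e_def E'_def algebra_simps)
  then show ?thesis unfolding alphaX alphaY .
qed

end

theorem mainTheorem15:
  fixes phi :: "nat \<Rightarrow> nat \<Rightarrow> nat \<Rightarrow> complex \<Rightarrow> complex \<Rightarrow> complex \<Rightarrow> complex"
    and j1 J :: nat and x12 x13 :: complex
  assumes "genus2_schur phi"
    and "J \<ge> j1" and "even (J - j1)"
    and "x12 \<noteq> 0" and "x13 \<noteq> 0" and "x13 \<noteq> x12" and "x13 * x12 \<noteq> 1"
  shows "(\<Sum>j2\<in>{j2. j2 \<le> J \<and> admissible j1 j2 (J - j2)}. phi j1 j2 (J - j2) x12 x13 1)
       = (1 - x13 ^ (j1 + 1) * inverse x12 ^ (j1 + 1)) * (1 - x13 ^ (j1 + 1) * x12 ^ (j1 + 1))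
         / ((of_nat j1 + 1) * x13 ^ j1 * (1 - x13 / x12) * (1 - x13 * x12))"
proof -
  interpret L phi x12 x13 using assms(1,4,5) by unfold_locales
  obtain m where Jm: "J = j1 + 2 * m" using assms(2,3) by (metis dvd_def le_add_diff_inverse)
  have set_eq: "{j2. j2 \<le> J \<and> admissible j1 j2 (J - j2)} = {0 + m..j1 + m}"
    unfolding Jm by (auto simp: admissible_def)
  have "(\<Sum>j2\<in>{j2. j2 \<le> J \<and> admissible j1 j2 (J - j2)}. phi j1 j2 (J - j2) x12 x13 1)
      = (\<Sum>i\<in>{0..j1}. phi j1 (i + m) (J - (i + m)) x12 x13 1)"
    unfolding set_eq sum.shift_bounds_cl_nat_ivl ..
  also have "\<dots> = (\<Sum>i<Suc j1. ph j1 (int m) (int i))"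
    unfolding atLeast0AtMost lessThan_Suc_atMost[symmetric]
  proof (rule sum.cong[OF refl])
    fix i assume "i \<in> {..<Suc j1}"
    then have i: "i \<le> j1" by simp
    have "phi j1 (m + i) (j1 + m - i) x12 x13 1 = g (int j1) (int (m + i)) (int (j1 + m - i))"
      by (rule g_adm[OF adm_z[OF i], symmetric])
    also have "\<dots> = ph j1 (int m) (int i)" using i by (simp add: ph_def of_nat_diff)
    finally show "phi j1 (i + m) (J - (i + m)) x12 x13 1 = ph j1 (int m) (int i)"
      unfolding Jm by (simp add: add.commute)
  qed
  also have "\<dots> = S j1 (int m)" by (simp add: S_def)
  also have "\<dots> = S j1 0" by (rule S_const)
  also have "\<dots> = (\<Sum>i<Suc j1. e j1 (int i))" by (simp add: S_def ph_def e_def)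
  also have "\<dots> = (1 - x13 ^ (j1 + 1) * inverse x12 ^ (j1 + 1)) * (1 - x13 ^ (j1 + 1) * x12 ^ (j1 + 1))
         / ((of_nat j1 + 1) * x13 ^ j1 * (1 - x13 / x12) * (1 - x13 * x12))"
    by (rule final_alg[OF assms(4,5,6,7) E_formula])
  finally show ?thesis .
qed


end
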